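(* Let $n\ge 1$ and let $m\in\{3,5,6\}$ or $m=2^k$ for some integer $k\ge 2$. Then the grid graph $P_m\times P_n$ is odd prime.
   Context: All graphs are finite and simple. A graph $G$ of order $N$ is odd prime if there is a bijection $\ell:V(G)\to\{1,3,\ldots,2N-1\}$ with $\gcd(\ell(u),\ell(v))=1$ for every edge $uv$. $P_r$ denotes the path on $r$ vertices, and the grid graph $P_m\times P_n$ is the Cartesian product of $P_m$ and $P_n$: vertices $(a,b)$ with $1\le a\le m$, $1\le b\le n$, two vertices adjacent when they agree in one coordinate and differ by $1$ in the other. *)

theory Defs
  imports Main
begin

definition odd_prime_graph :: "'a set \<Rightarrow> ('a \<Rightarrow> 'a \<Rightarrow> bool) \<Rightarrow> bool" where
  "odd_prime_graph V E \<longleftrightarrow>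
     (\<exists>l. bij_betw l V {k. \<exists>i<card V. k = 2 * i + 1} \<and>
          (\<forall>u\<in>V. \<forall>v\<in>V. E u v \<longrightarrow> coprime (l u) (l v :: nat)))"

definition grid_vertices :: "nat \<Rightarrow> nat \<Rightarrow> (nat \<times> nat) set" where
  "grid_vertices m n = {1..m} \<times> {1..n}"

definition grid_adj :: "nat \<times> nat \<Rightarrow> nat \<times> nat \<Rightarrow> bool" where
  "grid_adj p q \<longleftrightarrow>
     (fst p = fst q \<and> (snd p = snd q + 1 \<or> snd q = snd p + 1)) \<or>
     (snd p = snd q \<and> (fst p = fst q + 1 \<or> fst q = fst p + 1))"

end

theory Submission
  imports Defs
begin

lemma cop2: "odd (x::nat) \<Longrightarrow> coprime x (x + 2^e)"
  by (metis coprimeI coprime_power_right_iff coprime_right_2_iff_odd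
    dvd_add_right_iff not_coprimeI)

lemma divmod_uniq:
  fixes m j j' x x' :: nat
  assumes "x < m" "x' < m" "m * j + x = m * j' + x'"
  shows "j = j' \<and> x = x'"
proof -
  have "(m * j + x) div m = j" using assms(1) by simp
  moreover have "(m * j' + x') div m = j'" using assms(2) by simp
  ultimately have "j = j'" using assms(3) by simp
  then show ?thesis using assms(3) by simp
qed

lemma generic:
  fixes m n p :: nat and g :: "nat \<Rightarrow> nat \<Rightarrow> nat"
  assumes mp: "m \<ge> 1" "p \<ge> 1"
    and P1: "\<And>t a. t < p \<Longrightarrow> a < m \<Longrightarrow> g a t < m"
    and P1i: "\<And>t a a'. t < p \<Longrightarrow> a < m \<Longrightarrow> a' < m \<Longrightarrow> g a t = g a' t \<Longrightarrow> a = a'"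
    and P2: "\<And>t a. t < p \<Longrightarrow> a + 1 < m \<Longrightarrow>
               \<exists>e. g (a+1) t = g a t + 2^e \<or> g a t = g (a+1) t + 2^e"
    and P3: "\<And>t a. t < p \<Longrightarrow> a < m \<Longrightarrow> \<exists>e. m + g a ((t+1) mod p) = g a t + 2^e"
  shows "odd_prime_graph (grid_vertices m n) grid_adj"
proof -
  define V where "V = grid_vertices m n"
  define L where "L = (\<lambda>(a::nat,b::nat). 2*(m*(b-1) + g (a-1) ((b-1) mod p)) + 1)"
  define T where "T = {k. \<exists>i<card V. k = 2 * i + 1}"
  have finV: "finite V" unfolding V_def grid_vertices_def by simp
  have cardV: "card V = m * n" unfolding V_def grid_vertices_def by (simp add: card_cartesian_product)
  have T_eq: "T = (\<lambda>i. 2*i+1) ` {..<m*n}" unfolding T_def cardV by auto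
  have cardT: "card T = m * n" unfolding T_eq by (subst card_image) (auto simp: inj_on_def)
  have inj: "inj_on L V"
  proof (rule inj_onI)
    fix u v assume u: "u \<in> V" and v: "v \<in> V" and e: "L u = L v"
    obtain a b where ab: "u = (a,b)" by (cases u)
    obtain a' b' where ab': "v = (a',b')" by (cases v)
    have r: "1 \<le> a" "a \<le> m" "1 \<le> b" "b \<le> n" "1 \<le> a'" "a' \<le> m" "1 \<le> b'" "b' \<le> n"
      using u v ab ab' unfolding V_def grid_vertices_def by auto
    have tp: "(b-1) mod p < p" "(b'-1) mod p < p" using mp by auto
    have "m*(b-1) + g (a-1) ((b-1) mod p) = m*(b'-1) + g (a'-1) ((b'-1) mod p)"
      using e ab ab' unfolding L_def by simp
    moreover have "g (a-1) ((b-1) mod p) < m" "g (a'-1) ((b'-1) mod p) < m"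
      using P1 tp r by auto
    ultimately have "b-1 = b'-1" "g (a-1) ((b-1) mod p) = g (a'-1) ((b'-1) mod p)"
      using divmod_uniq by blast+
    moreover then have "a - 1 = a' - 1" using P1i[of "(b-1) mod p" "a-1" "a'-1"] tp r by auto
    ultimately show "u = v" using ab ab' r by auto
  qed
  have sub: "L ` V \<subseteq> T"
  proof
    fix k assume "k \<in> L ` V"
    then obtain a b where ab: "(a,b) \<in> V" "k = L (a,b)" by auto
    have r: "1 \<le> a" "a \<le> m" "1 \<le> b" "b \<le> n" using ab unfolding V_def grid_vertices_def by auto
    have "g (a-1) ((b-1) mod p) < m" using P1 r mp by auto
    hence "m*(b-1) + g (a-1) ((b-1) mod p) < m*(b-1) + m" by simp
    also have "\<dots> = m * b" using r by (cases b) auto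
    also have "\<dots> \<le> m * n" using r by simp
    finally have lt: "m*(b-1) + g (a-1) ((b-1) mod p) < m * n" .
    have "k = 2 * (m*(b-1) + g (a-1) ((b-1) mod p)) + 1" using ab(2) unfolding L_def by simp
    then show "k \<in> T" unfolding T_eq using lt by (intro image_eqI[where x="m*(b-1) + g (a-1) ((b-1) mod p)"]) auto
  qed
  have bij: "bij_betw L V T"
    unfolding bij_betw_def
    using inj sub card_subset_eq[of T "L ` V"] card_image[OF inj] cardT cardV T_eq by auto
  have oddL: "odd (L u)" for u unfolding L_def by (simp add: split_beta)
  have edge: "coprime (L u) (L v)" if u: "u \<in> V" and v: "v \<in> V" and adj: "grid_adj u v" for u v
  proof -
    have key: "\<exists>e. L v = L u + 2^e \<or> L u = L v + 2^e"
    proof -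
      obtain a b where ab: "u = (a,b)" by (cases u)
      obtain a' b' where ab': "v = (a',b')" by (cases v)
      have r: "1 \<le> a" "a \<le> m" "1 \<le> b" "b \<le> n" "1 \<le> a'" "a' \<le> m" "1 \<le> b'" "b' \<le> n"
        using u v ab ab' unfolding V_def grid_vertices_def by auto
      have H: "\<exists>e. L (a, b+1) = L (a,b) + 2^e" if h: "1 \<le> a" "a \<le> m" "1 \<le> b" for a b
      proof -
        define t where "t = (b-1) mod p"
        have tp: "t < p" using mp t_def by auto
        obtain e where e: "m + g (a-1) ((t+1) mod p) = g (a-1) t + 2^e" using P3[OF tp, of "a-1"] h by (meson diff_less less_le_trans zero_less_one)
        have "(b+1-1) mod p = (t+1) mod p" using that unfolding t_def
          by (cases b) (auto simp: mod_Suc_eq)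
        hence "L (a, b+1) = 2*(m*(b-1) + (m + g (a-1) ((t+1) mod p))) + 1"
          unfolding L_def using that by (cases b) (auto simp: algebra_simps)
        also have "\<dots> = L (a,b) + 2^(Suc e)" using e unfolding L_def t_def by simp
        finally show ?thesis by blast
      qed
      have W: "\<exists>e. L (a+1, b) = L (a,b) + 2^e \<or> L (a,b) = L (a+1,b) + 2^e"
        if h: "1 \<le> a" "a + 1 \<le> m" for a b
      proof -
        define t where "t = (b-1) mod p"
        have tp: "t < p" using mp t_def by auto
        obtain e where e: "g a t = g (a-1) t + 2^e \<or> g (a-1) t = g a t + 2^e"
          using P2[OF tp, of "a-1"] h by auto
        have q: "a - 1 + 1 = a" using that by simp
        have "L (a+1, b) = L (a,b) + 2^(Suc e) \<or> L (a,b) = L (a+1,b) + 2^(Suc e)"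
          using e unfolding L_def t_def by auto
        thus ?thesis by blast
      qed
      from adj ab ab' have
        "(a = a' \<and> (b = b' + 1 \<or> b' = b + 1)) \<or> (b = b' \<and> (a = a' + 1 \<or> a' = a + 1))"
        unfolding grid_adj_def by auto
      then show ?thesis
      proof (elim disjE conjE)
        assume "a = a'" "b = b' + 1" thus ?thesis using H[of a b'] r ab ab' by auto
      next
        assume "a = a'" "b' = b + 1" thus ?thesis using H[of a b] r ab ab' by auto
      next
        assume "b = b'" "a = a' + 1" thus ?thesis using W[of a' b] r ab ab' by auto
      next
        assume "b = b'" "a' = a + 1" thus ?thesis using W[of a b] r ab ab' by auto
      qed
    qed
    then obtain e where "L v = L u + 2^e \<or> L u = L v + 2^e" by blast
    thus ?thesis using cop2 oddL by (metis coprime_commute)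
  qed
  show ?thesis unfolding odd_prime_graph_def V_def[symmetric] T_def[symmetric]
    using bij edge by blast
qed


lemma pw: "(y::nat) < x \<Longrightarrow> x - y \<in> {1,2,4,8} \<Longrightarrow> \<exists>e. x = y + 2^e"
proof -
  assume a: "y < x" "x - y \<in> {1,2,4,8}"
  then have "x = y + 2^0 \<or> x = y + 2^1 \<or> x = y + 2^2 \<or> x = y + 2^3" by auto
  then show ?thesis by blast
qed

lemma generic2:
  fixes m n p :: nat and g :: "nat \<Rightarrow> nat \<Rightarrow> nat"
  assumes mp: "m \<ge> 1" "p \<ge> 1"
    and Q: "\<And>t a. t < p \<Longrightarrow> a < m \<Longrightarrow> g a t < m \<and>
   (a + 1 < m \<longrightarrow> (g a t < g (a+1) t \<and> g (a+1) t - g a t \<in> {1,2,4,8}) \<or> (g (a+1) t < g a t \<and> g a t - g (a+1) t \<in> {1,2,4,8})) \<and>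
   (g a t < m + g a ((t+1) mod p) \<and> m + g a ((t+1) mod p) - g a t \<in> {1,2,4,8})"
    and P1i: "\<And>t a a'. t < p \<Longrightarrow> a < m \<Longrightarrow> a' < m \<Longrightarrow> g a t = g a' t \<Longrightarrow> a = a'"
  shows "odd_prime_graph (grid_vertices m n) grid_adj"
proof (rule generic[OF mp, of g])
  show "g a t < m" if "t < p" "a < m" for t a using Q[OF that] by blast
  show "a = a'" if "t < p" "a < m" "a' < m" "g a t = g a' t" for t a a' using P1i that by blast
  show "\<exists>e. g (a+1) t = g a t + 2^e \<or> g a t = g (a+1) t + 2^e" if "t < p" "a + 1 < m" for t a
  proof -
    have "a < m" using that by simp
    then show ?thesis using Q[OF that(1)] that(2) pw by metis
  qed
  show "\<exists>e. m + g a ((t+1) mod p) = g a t + 2^e" if "t < p" "a < m" for t a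
    using Q[OF that] pw by blast
qed

lemma fin3: "(a::nat) < 3 \<Longrightarrow> a = 0 \<or> a = 1 \<or> a = 2" by auto
lemma fin5: "(a::nat) < 5 \<Longrightarrow> a = 0 \<or> a = 1 \<or> a = 2 \<or> a = 3 \<or> a = 4" by auto
lemma fin6: "(a::nat) < 6 \<Longrightarrow> a = 0 \<or> a = 1 \<or> a = 2 \<or> a = 3 \<or> a = 4 \<or> a = 5" by auto

definition g3 :: "nat \<Rightarrow> nat \<Rightarrow> nat" where "g3 a t = (a + t) mod 3"
definition g5 :: "nat \<Rightarrow> nat \<Rightarrow> nat" where
 "g5 a t = [0,3,2,1,4] ! (([0,2,4,1,3] ! a + t) mod 5)"
definition g6 :: "nat \<Rightarrow> nat \<Rightarrow> nat" where
 "g6 a t = ([0,2,4,5,1,3] ! a + 2 * t) mod 6"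

lemma case3: "odd_prime_graph (grid_vertices 3 n) grid_adj"
proof (rule generic2[of 3 3 g3])
  show "g3 a t < 3 \<and>
   (a + 1 < 3 \<longrightarrow> (g3 a t < g3 (a+1) t \<and> g3 (a+1) t - g3 a t \<in> {1,2,4,8}) \<or> (g3 (a+1) t < g3 a t \<and> g3 a t - g3 (a+1) t \<in> {1,2,4,8})) \<and>
   (g3 a t < 3 + g3 a ((t+1) mod 3) \<and> 3 + g3 a ((t+1) mod 3) - g3 a t \<in> {1,2,4,8})"
    if "t < 3" "a < 3" for t a
    using that apply - apply (drule fin3)+ apply (elim disjE) by (simp_all add: g3_def)
  show "a = a'" if "t < 3" "a < 3" "a' < 3" "g3 a t = g3 a' t" for t a a'
    using that apply - apply (drule fin3)+ apply (elim disjE) by (simp_all add: g3_def)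
qed auto

lemma case5: "odd_prime_graph (grid_vertices 5 n) grid_adj"
proof (rule generic2[of 5 5 g5])
  show "g5 a t < 5 \<and>
   (a + 1 < 5 \<longrightarrow> (g5 a t < g5 (a+1) t \<and> g5 (a+1) t - g5 a t \<in> {1,2,4,8}) \<or> (g5 (a+1) t < g5 a t \<and> g5 a t - g5 (a+1) t \<in> {1,2,4,8})) \<and>
   (g5 a t < 5 + g5 a ((t+1) mod 5) \<and> 5 + g5 a ((t+1) mod 5) - g5 a t \<in> {1,2,4,8})"
    if "t < 5" "a < 5" for t a
    using that apply - apply (drule fin5)+ apply (elim disjE) by (simp_all add: g5_def)
  show "a = a'" if "t < 5" "a < 5" "a' < 5" "g5 a t = g5 a' t" for t a a'
    using that apply - apply (drule fin5)+ apply (elim disjE) by (simp_all add: g5_def)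
qed auto

lemma case6: "odd_prime_graph (grid_vertices 6 n) grid_adj"
proof (rule generic2[of 6 3 g6])
  show "g6 a t < 6 \<and>
   (a + 1 < 6 \<longrightarrow> (g6 a t < g6 (a+1) t \<and> g6 (a+1) t - g6 a t \<in> {1,2,4,8}) \<or> (g6 (a+1) t < g6 a t \<and> g6 a t - g6 (a+1) t \<in> {1,2,4,8})) \<and>
   (g6 a t < 6 + g6 a ((t+1) mod 3) \<and> 6 + g6 a ((t+1) mod 3) - g6 a t \<in> {1,2,4,8})"
    if "t < 3" "a < 6" for t a
    using that apply - apply (drule fin3) apply (drule fin6) apply (elim disjE) by (simp_all add: g6_def)
  show "a = a'" if "t < 3" "a < 6" "a' < 6" "g6 a t = g6 a' t" for t a a'
    using that apply - apply (drule fin3) apply (drule fin6)+ apply (elim disjE) by (simp_all add: g6_def)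
qed auto

lemma case2k: "odd_prime_graph (grid_vertices (2^k) n) grid_adj"
proof (rule generic[of "2^k" 1 "\<lambda>a t. a"])
  show "\<exists>e. a + 1 = a + 2^e \<or> a = a + 1 + 2^e" for a by (rule exI[of _ 0]) simp
qed auto

theorem corollary3p11:
  fixes m n :: nat
  assumes "n \<ge> 1"
    and "m \<in> {3, 5, 6} \<or> (\<exists>k::nat. k \<ge> 2 \<and> m = 2 ^ k)"
  shows "odd_prime_graph (grid_vertices m n) grid_adj"
  using assms(2) case3 case5 case6 case2k by auto

end
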